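(* Let $X$ be a reflexive complex Banach space, let $D\subseteq X$ be a dense linear subspace, and let $t:D\times D\to\mathbb{C}$ be a sesquilinear form (linear in the first variable, conjugate linear in the second) such that $t(x,x)\ge\gamma\|x\|^2$ for all $x\in D$ with some constant $\gamma>0$, and such that $D$ equipped with the inner product $t(\cdot,\cdot)$ is complete (a Hilbert space). Define the operator $A$ from $X$ to $X^\ast$ as follows: $\operatorname{dom}A$ is the set of those $x\in D$ for which the functional $y\mapsto t(x,y)$ is continuous on $D$ with respect to the norm of $X$, and for such $x$, $Ax$ is the unique $z\in X^\ast$ with $(z,y)=t(x,y)$ for all $y\in D$. Then $A$ is a positive, self-adjoint operator from $X$ to $X^\ast$.
   Context: $X^\ast$ denotes the conjugate dual of $X$: the space of all continuous conjugate-linear functionals on $X$; $X$ is identified with $X^{\ast\ast}$ via reflexivity. For $v\in X^\ast$, $x\in X$ write $(v,x):=v(x)$ and $(x,v):=\overline{v(x)}$. For a densely defined linear operator $A$ from $X$ to $X^\ast$: $A$ is positive if $(Ax,x)\ge 0$ for all $x\in\operatorname{dom}A$; the adjoint $A^\ast$ is the operator from $X$ to $X^\ast$ with $\operatorname{dom}A^\ast=\{y\in X: x\mapsto (Ax,y)\text{ is continuous on }\operatorname{dom}A\text{ in the norm of }X\}$ and $A^\ast y$ the unique element of $X^\ast$ with $(x,A^\ast y)=(Ax,y)$ for all $x\in\operatorname{dom}A$; $A$ is self-adjoint if $A=A^\ast$. *)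

theory Defs
  imports "HOL-Analysis.Analysis"
begin

text \<open>HOL-Analysis has no complex vector spaces; we introduce the class of complex normed
  vector spaces: real normed spaces with a compatible complex scalar multiplication.\<close>
class cnormed_vector = real_normed_vector +
  fixes scaleC :: "complex \<Rightarrow> 'a \<Rightarrow> 'a" (infixr \<open>*\<^sub>C\<close> 75)
  assumes scaleC_add_right: "a *\<^sub>C (x + y) = a *\<^sub>C x + a *\<^sub>C y"
    and scaleC_add_left: "(a + b) *\<^sub>C x = a *\<^sub>C x + b *\<^sub>C x"
    and scaleC_scaleC: "a *\<^sub>C (b *\<^sub>C x) = (a * b) *\<^sub>C x"
    and scaleC_one: "1 *\<^sub>C x = x"
    and scaleR_scaleC: "r *\<^sub>R x = complex_of_real r *\<^sub>C x"
    and norm_scaleC: "norm (a *\<^sub>C x) = cmod a * norm x"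

definition conj_linear :: "('a::cnormed_vector \<Rightarrow> complex) \<Rightarrow> bool" where
  "conj_linear f \<longleftrightarrow> (\<forall>x y. f (x + y) = f x + f y) \<and> (\<forall>c x. f (c *\<^sub>C x) = cnj c * f x)"

text \<open>The conjugate dual X*: continuous conjugate-linear functionals on X.\<close>
definition cdual :: "('a::cnormed_vector \<Rightarrow> complex) set" where
  "cdual = {f. conj_linear f \<and> continuous_on UNIV f}"

text \<open>Reflexivity: every bounded conjugate-linear functional on X* (normed by the operator
  norm) is of the form v \<mapsto> (x,v) = cnj (v x) for some x in X.\<close>
definition reflexive_space :: "'a::cnormed_vector itself \<Rightarrow> bool" where
  "reflexive_space _ \<longleftrightarrow>
     (\<forall>\<Phi> :: ('a \<Rightarrow> complex) \<Rightarrow> complex.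
        (\<forall>v\<in>cdual. \<forall>w\<in>cdual. \<Phi> (\<lambda>x. v x + w x) = \<Phi> v + \<Phi> w) \<and>
        (\<forall>c. \<forall>v\<in>cdual. \<Phi> (\<lambda>x. c * v x) = cnj c * \<Phi> v) \<and>
        (\<exists>K. \<forall>v\<in>cdual. norm (\<Phi> v) \<le> K * onorm v)
        \<longrightarrow> (\<exists>x::'a. \<forall>v\<in>cdual. \<Phi> v = cnj (v x)))"

definition complex_subspace :: "'a::cnormed_vector set \<Rightarrow> bool" where
  "complex_subspace S \<longleftrightarrow> 0 \<in> S \<and> (\<forall>x\<in>S. \<forall>y\<in>S. x + y \<in> S) \<and> (\<forall>c. \<forall>x\<in>S. c *\<^sub>C x \<in> S)"

definition sesquilinear_on :: "'a::cnormed_vector set \<Rightarrow> ('a \<Rightarrow> 'a \<Rightarrow> complex) \<Rightarrow> bool" where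
  "sesquilinear_on D t \<longleftrightarrow>
     (\<forall>x\<in>D. \<forall>x'\<in>D. \<forall>y\<in>D. t (x + x') y = t x y + t x' y) \<and>
     (\<forall>c. \<forall>x\<in>D. \<forall>y\<in>D. t (c *\<^sub>C x) y = c * t x y) \<and>
     (\<forall>x\<in>D. \<forall>y\<in>D. \<forall>y'\<in>D. t x (y + y') = t x y + t x y') \<and>
     (\<forall>c. \<forall>x\<in>D. \<forall>y\<in>D. t x (c *\<^sub>C y) = cnj c * t x y)"

definition form_complete :: "'a::cnormed_vector set \<Rightarrow> ('a \<Rightarrow> 'a \<Rightarrow> complex) \<Rightarrow> bool" where
  "form_complete D t \<longleftrightarrow>
     (\<forall>u :: nat \<Rightarrow> 'a. (\<forall>n. u n \<in> D) \<and>
        (\<forall>e>0. \<exists>N. \<forall>m\<ge>N. \<forall>n\<ge>N. sqrt (Re (t (u m - u n) (u m - u n))) < e)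
        \<longrightarrow> (\<exists>x\<in>D. (\<lambda>n. sqrt (Re (t (u n - x) (u n - x)))) \<longlonglongrightarrow> 0))"

definition form_dom :: "'a::cnormed_vector set \<Rightarrow> ('a \<Rightarrow> 'a \<Rightarrow> complex) \<Rightarrow> 'a set" where
  "form_dom D t = {x \<in> D. continuous_on D (\<lambda>y. t x y)}"

definition form_op :: "'a::cnormed_vector set \<Rightarrow> ('a \<Rightarrow> 'a \<Rightarrow> complex) \<Rightarrow> 'a \<Rightarrow> ('a \<Rightarrow> complex)" where
  "form_op D t x = (THE z. z \<in> cdual \<and> (\<forall>y\<in>D. z y = t x y))"

definition dd_operator :: "'a::cnormed_vector set \<Rightarrow> ('a \<Rightarrow> ('a \<Rightarrow> complex)) \<Rightarrow> bool" where
  "dd_operator Dm A \<longleftrightarrow> complex_subspace Dm \<and> closure Dm = UNIV \<and>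
     (\<forall>x\<in>Dm. A x \<in> cdual) \<and>
     (\<forall>x\<in>Dm. \<forall>y\<in>Dm. A (x + y) = (\<lambda>z. A x z + A y z)) \<and>
     (\<forall>c. \<forall>x\<in>Dm. A (c *\<^sub>C x) = (\<lambda>z. c * A x z))"

definition positive_op :: "'a::cnormed_vector set \<Rightarrow> ('a \<Rightarrow> ('a \<Rightarrow> complex)) \<Rightarrow> bool" where
  "positive_op Dm A \<longleftrightarrow> (\<forall>x\<in>Dm. Im (A x x) = 0 \<and> 0 \<le> Re (A x x))"

definition adjoint_dom :: "'a::cnormed_vector set \<Rightarrow> ('a \<Rightarrow> ('a \<Rightarrow> complex)) \<Rightarrow> 'a set" where
  "adjoint_dom Dm A = {y. continuous_on Dm (\<lambda>x. A x y)}"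

text \<open>(x, A* y) = cnj ((A* y) x) and (A x, y) = A x y.\<close>
definition adjoint_op :: "'a::cnormed_vector set \<Rightarrow> ('a \<Rightarrow> ('a \<Rightarrow> complex)) \<Rightarrow> 'a \<Rightarrow> ('a \<Rightarrow> complex)" where
  "adjoint_op Dm A y = (THE w. w \<in> cdual \<and> (\<forall>x\<in>Dm. cnj (w x) = A x y))"

definition self_adjoint_op :: "'a::cnormed_vector set \<Rightarrow> ('a \<Rightarrow> ('a \<Rightarrow> complex)) \<Rightarrow> bool" where
  "self_adjoint_op Dm A \<longleftrightarrow> adjoint_dom Dm A = Dm \<and> (\<forall>y\<in>Dm. adjoint_op Dm A y = A y)"

end

theory Submission
  imports Defs
begin


lemma scaleC_zero_right [simp]: "c *\<^sub>C (0::'a::cnormed_vector) = 0"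
proof -
  have "c *\<^sub>C (0::'a) = c *\<^sub>C 0 + c *\<^sub>C 0" by (metis add.right_neutral scaleC_add_right)
  then show ?thesis by simp
qed

lemma scaleC_zero_left [simp]: "0 *\<^sub>C (x::'a::cnormed_vector) = 0"
proof -
  have "0 *\<^sub>C x = 0 *\<^sub>C x + 0 *\<^sub>C x" by (metis add.right_neutral scaleC_add_left)
  then show ?thesis by simp
qed

lemma scaleC_minus_right: "c *\<^sub>C (- x::'a::cnormed_vector) = - (c *\<^sub>C x)"
proof -
  have "c *\<^sub>C x + c *\<^sub>C (- x) = 0" by (metis scaleC_add_right right_minus scaleC_zero_right)
  then show ?thesis by (simp add: eq_neg_iff_add_eq_0 add.commute)
qed

lemma scaleC_diff_right: "c *\<^sub>C (x - y::'a::cnormed_vector) = c *\<^sub>C x - c *\<^sub>C y"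
  by (metis diff_conv_add_uminus scaleC_add_right scaleC_minus_right)

lemma scaleC_minus_left: "(- c) *\<^sub>C (x::'a::cnormed_vector) = - (c *\<^sub>C x)"
proof -
  have "c *\<^sub>C x + (- c) *\<^sub>C x = 0" by (metis scaleC_add_left right_minus scaleC_zero_left)
  then show ?thesis by (simp add: eq_neg_iff_add_eq_0 add.commute)
qed

lemma scaleC_of_real: "complex_of_real r *\<^sub>C (x::'a::cnormed_vector) = r *\<^sub>R x"
  by (simp add: scaleR_scaleC)

lemma scaleC_scaleR_comm: "c *\<^sub>C (r *\<^sub>R (x::'a::cnormed_vector)) = r *\<^sub>R (c *\<^sub>C x)"
  by (simp add: scaleR_scaleC scaleC_scaleC mult.commute)

lemma scaleC_minus_one: "(-1) *\<^sub>C (x::'a::cnormed_vector) = - x"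
  by (simp add: scaleC_minus_left scaleC_one)

lemma scaleC_bounded_linear: "bounded_linear (\<lambda>x::'a::cnormed_vector. c *\<^sub>C x)"
  by (rule bounded_linear_intro[where K="cmod c"])
     (auto simp: scaleC_add_right scaleC_scaleR_comm norm_scaleC mult.commute)

lemma cont_scale_bound:
  fixes f :: "'a::real_normed_vector \<Rightarrow> 'b::real_normed_vector"
  assumes S: "\<And>r x. x \<in> S \<Longrightarrow> r *\<^sub>R x \<in> S"
    and fs: "\<And>r x. x \<in> S \<Longrightarrow> f (r *\<^sub>R x) = r *\<^sub>R f x"
    and c: "continuous_on S f" and z: "0 \<in> S"
  shows "\<exists>K>0. \<forall>x\<in>S. norm (f x) \<le> K * norm x"
proof -
  have f0: "f 0 = 0" using fs[OF z, of 0] by simp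
  obtain d where d: "d > 0" "\<forall>x'\<in>S. dist x' 0 < d \<longrightarrow> dist (f x') (f 0) < 1"
    using c z unfolding continuous_on_iff by (meson zero_less_one)
  have "\<forall>x\<in>S. norm (f x) \<le> (2/d) * norm x"
  proof
    fix x assume xS: "x \<in> S"
    show "norm (f x) \<le> (2/d) * norm x"
    proof (cases "x = 0")
      case True then show ?thesis using f0 by simp
    next
      case False
      define r where "r = d / (2 * norm x)"
      have r: "r > 0" using False d(1) by (simp add: r_def)
      have "norm (r *\<^sub>R x) = d/2" using False r d(1) by (simp add: r_def)
      then have "dist (f (r *\<^sub>R x)) (f 0) < 1" using d S[OF xS] d by auto
      then have "r * norm (f x) < 1" using fs[OF xS] f0 r by simp
      then have "norm (f x) < 1 / r" using r by (simp add: field_simps)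
      also have "1 / r = (2/d) * norm x" using False d by (simp add: r_def field_simps)
      finally show ?thesis by simp
    qed
  qed
  then show ?thesis using d by (intro exI[of _ "2/d"]) auto
qed

section \<open>Real Hahn-Banach (norm dominated)\<close>

definition hb_set :: "'a::real_normed_vector \<Rightarrow> ('a \<times> real) set set" where
  "hb_set y = {G. (\<forall>x a b. (x,a)\<in>G \<longrightarrow> (x,b)\<in>G \<longrightarrow> a = b) \<and>
      (\<forall>x a x' a'. (x,a)\<in>G \<longrightarrow> (x',a')\<in>G \<longrightarrow> (x+x', a+a')\<in>G) \<and>
      (\<forall>r x a. (x,a)\<in>G \<longrightarrow> (r *\<^sub>R x, r*a)\<in>G) \<and>
      (\<forall>x a. (x,a)\<in>G \<longrightarrow> a \<le> norm x) \<and>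
      {(r *\<^sub>R y, r * norm y) | r. True} \<subseteq> G}"

lemma hb_fun: assumes "G \<in> hb_set y" "(x,a)\<in>G" "(x,b)\<in>G" shows "a = b"
proof -
  have "\<forall>x a b. (x,a)\<in>G \<longrightarrow> (x,b)\<in>G \<longrightarrow> a = b"
    using assms(1) unfolding hb_set_def mem_Collect_eq by (elim conjE) assumption
  then show ?thesis using assms(2,3) by blast
qed
lemma hb_add: assumes "G \<in> hb_set y" "(x,a)\<in>G" "(x',a')\<in>G" shows "(x+x', a+a')\<in>G"
proof -
  have "\<forall>x a x' a'. (x,a)\<in>G \<longrightarrow> (x',a')\<in>G \<longrightarrow> (x+x', a+a')\<in>G"
    using assms(1) unfolding hb_set_def mem_Collect_eq by (elim conjE) assumption
  then show ?thesis using assms(2,3) by blast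
qed
lemma hb_scl: assumes "G \<in> hb_set y" "(x,a)\<in>G" shows "(r *\<^sub>R x, r*a)\<in>G"
proof -
  have "\<forall>r x a. (x,a)\<in>G \<longrightarrow> (r *\<^sub>R x, r*a)\<in>G"
    using assms(1) unfolding hb_set_def mem_Collect_eq by (elim conjE) assumption
  then show ?thesis using assms(2) by blast
qed
lemma hb_dom: assumes "G \<in> hb_set y" "(x,a)\<in>G" shows "a \<le> norm x"
proof -
  have "\<forall>x a. (x,a)\<in>G \<longrightarrow> a \<le> norm x"
    using assms(1) unfolding hb_set_def mem_Collect_eq by (elim conjE) assumption
  then show ?thesis using assms(2) by blast
qed
lemma hb_G0sub: "G \<in> hb_set y \<Longrightarrow> {(r *\<^sub>R y, r * norm y) | r. True} \<subseteq> G"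
  unfolding hb_set_def mem_Collect_eq by (elim conjE) assumption

lemma hb_setI:
  assumes "\<And>x a b. (x,a)\<in>G \<Longrightarrow> (x,b)\<in>G \<Longrightarrow> a = b"
    "\<And>x a x' a'. (x,a)\<in>G \<Longrightarrow> (x',a')\<in>G \<Longrightarrow> (x+x', a+a')\<in>G"
    "\<And>r x a. (x,a)\<in>G \<Longrightarrow> (r *\<^sub>R x, r*a)\<in>G"
    "\<And>x a. (x,a)\<in>G \<Longrightarrow> a \<le> norm x"
    "{(r *\<^sub>R y, r * norm y) | r. True} \<subseteq> G"
  shows "G \<in> hb_set y"
  unfolding hb_set_def using assms by (intro CollectI conjI allI impI) 

lemma hb_G0: "{(r *\<^sub>R y, r * norm y) | r. True} \<in> hb_set (y::'a::real_normed_vector)"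
proof -
  let ?G = "{(r *\<^sub>R y, r * norm y) | r. True}"
  have 1: "a = b" if h: "(x,a)\<in>?G" "(x,b)\<in>?G" for x a b
  proof -
    obtain r s where "x = r *\<^sub>R y" "a = r * norm y" "x = s *\<^sub>R y" "b = s * norm y" using h by blast
    then show ?thesis by (cases "y = 0") (auto simp: scaleR_cancel_right)
  qed
  have 2: "(x+x', a+a')\<in>?G" if h: "(x,a)\<in>?G" "(x',a')\<in>?G" for x a x' a'
  proof -
    obtain r s where "x = r *\<^sub>R y" "a = r * norm y" "x' = s *\<^sub>R y" "a' = s * norm y" using h by blast
    then show ?thesis by (auto intro!: exI[of _ "r+s"] simp: scaleR_add_left distrib_right)
  qed
  have 3: "(r *\<^sub>R x, r*a)\<in>?G" if h: "(x,a)\<in>?G" for r x a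
  proof -
    obtain s where "x = s *\<^sub>R y" "a = s * norm y" using h by blast
    then show ?thesis by (auto intro!: exI[of _ "r * s"])
  qed
  have 4: "a \<le> norm x" if h: "(x,a)\<in>?G" for x a
  proof -
    obtain s where "x = s *\<^sub>R y" "a = s * norm y" using h by blast
    then show ?thesis by (auto intro!: mult_right_mono)
  qed
  show ?thesis by (rule hb_setI) (use 1 2 3 4 in auto)
qed

lemma hb_chain:
  fixes y :: "'a::real_normed_vector"
  assumes C: "C \<in> chains (hb_set y)"
  shows "\<exists>U\<in>hb_set y. \<forall>X\<in>C. X \<subseteq> U"
proof (cases "C = {}")
  case True then show ?thesis using hb_G0[of y] by (intro bexI[of _ "{(r *\<^sub>R y, r * norm y) | r. True}"]) simp_all
next
  case False
  have CA: "X \<in> hb_set y" if "X \<in> C" for X using chainsD2[OF C] that by (rule subsetD)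
  have cmp: "X \<subseteq> Y \<or> Y \<subseteq> X" if "X \<in> C" "Y \<in> C" for X Y using chainsD[OF C that] .
  have big: "\<exists>Z\<in>C. X \<subseteq> Z \<and> Y \<subseteq> Z" if "X \<in> C" "Y \<in> C" for X Y
    using cmp[OF that] that by blast
  have "\<Union>C \<in> hb_set y"
  proof (rule hb_setI)
    fix x a b assume "(x,a) \<in> \<Union>C" "(x,b) \<in> \<Union>C"
    then obtain X Y where XY: "X \<in> C" "Y \<in> C" "(x,a) \<in> X" "(x,b) \<in> Y" by (elim UnionE)
    obtain Z where Z: "Z \<in> C" "X \<subseteq> Z" "Y \<subseteq> Z" using big[OF XY(1,2)] by blast
    show "a = b" using hb_fun[OF CA[OF Z(1)]] XY Z by blast
  next
    fix x a x' a' assume "(x,a) \<in> \<Union>C" "(x',a') \<in> \<Union>C"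
    then obtain X Y where XY: "X \<in> C" "Y \<in> C" "(x,a) \<in> X" "(x',a') \<in> Y" by (elim UnionE)
    obtain Z where Z: "Z \<in> C" "X \<subseteq> Z" "Y \<subseteq> Z" using big[OF XY(1,2)] by blast
    have "(x+x', a+a') \<in> Z" using hb_add[OF CA[OF Z(1)]] XY Z by blast
    then show "(x+x', a+a') \<in> \<Union>C" using Z(1) by (rule UnionI[rotated])
  next
    fix r x a assume "(x,a) \<in> \<Union>C"
    then obtain X where X: "X \<in> C" "(x,a) \<in> X" by (elim UnionE)
    have "(r *\<^sub>R x, r*a) \<in> X" using hb_scl[OF CA[OF X(1)] X(2)] .
    then show "(r *\<^sub>R x, r*a) \<in> \<Union>C" using X(1) by (rule UnionI[rotated])
  next
    fix x a assume "(x,a) \<in> \<Union>C"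
    then obtain X where X: "X \<in> C" "(x,a) \<in> X" by (elim UnionE)
    show "a \<le> norm x" using hb_dom[OF CA[OF X(1)] X(2)] .
  next
    obtain X where X: "X \<in> C" using False by blast
    have "{(r *\<^sub>R y, r * norm y) | r. True} \<subseteq> X" using hb_G0sub[OF CA[OF X]] .
    also have "X \<subseteq> \<Union>C" using X by (rule Union_upper)
    finally show "{(r *\<^sub>R y, r * norm y) | r. True} \<subseteq> \<Union>C" .
  qed
  moreover have "\<forall>X\<in>C. X \<subseteq> \<Union>C" by (simp add: Union_upper)
  ultimately show ?thesis by (rule bexI[rotated])
qed

lemma hb_extend:
  fixes y :: "'a::real_normed_vector"
  assumes MA: "M \<in> hb_set y" and nz: "\<And>a. (z, a) \<notin> M"
  shows "\<exists>M'\<in>hb_set y. M \<subseteq> M' \<and> M' \<noteq> M"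
proof -
  have fnc: "a = b" if "(x,a)\<in>M" "(x,b)\<in>M" for x a b using hb_fun[OF MA that] .
  have add: "(x+x', a+a')\<in>M" if "(x,a)\<in>M" "(x',a')\<in>M" for x a x' a' using hb_add[OF MA that] .
  have scl: "(r *\<^sub>R x, r*a)\<in>M" if "(x,a)\<in>M" for r x a using hb_scl[OF MA that] .
  have dom: "a \<le> norm x" if "(x,a)\<in>M" for x a using hb_dom[OF MA that] .
  have G0M: "{(r *\<^sub>R y, r * norm y) | r. True} \<subseteq> M" using hb_G0sub[OF MA] .
  have zero: "(0, 0) \<in> M"
  proof -
    have "((0::real) *\<^sub>R y, 0 * norm y) \<in> {(r *\<^sub>R y, r * norm y) | r. True}" by blast
    then show ?thesis using G0M by auto
  qed
  let ?L = "{a - norm (x - z) | x a. (x,a) \<in> M}"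
  define c where "c = Sup ?L"
  have key: "a - norm (x - z) \<le> norm (w + z) - b" if "(x,a)\<in>M" "(w,b)\<in>M" for x a w b
  proof -
    have "a + b \<le> norm (x + w)" using dom[OF add[OF that]] .
    also have "x + w = (x - z) + (w + z)" by simp
    also have "norm \<dots> \<le> norm (x - z) + norm (w + z)" by (rule norm_triangle_ineq)
    finally show ?thesis by simp
  qed
  have Lne: "?L \<noteq> {}" using zero by blast
  have bdd: "bdd_above ?L"
  proof (rule bdd_aboveI[of _ "norm (0 + z) - 0"])
    fix u assume "u \<in> ?L"
    then obtain x a where "u = a - norm (x - z)" "(x,a) \<in> M" by blast
    then show "u \<le> norm (0 + z) - 0" using key[OF _ zero] by simp
  qed
  have cL: "a - norm (x - z) \<le> c" if "(x,a)\<in>M" for x a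
    unfolding c_def
  proof (rule cSup_upper)
    show "a - norm (x - z) \<in> ?L" using that by blast
    show "bdd_above ?L" by (rule bdd)
  qed
  have cU: "c \<le> norm (w + z) - b" if "(w,b)\<in>M" for w b
    unfolding c_def
  proof (rule cSup_least[OF Lne])
    fix u assume "u \<in> ?L"
    then obtain x a where "u = a - norm (x - z)" "(x,a) \<in> M" by blast
    then show "u \<le> norm (w + z) - b" using key[OF _ that] by simp
  qed
  define M' where "M' = {(x + r *\<^sub>R z, a + r * c) | x a r. (x,a) \<in> M}"
  have neg: "(x - x', a - a') \<in> M" if "(x,a)\<in>M" "(x',a')\<in>M" for x a x' a'
    using add[OF that(1) scl[OF that(2), of "-1"]] by simp
  have M'A: "M' \<in> hb_set y"
  proof (rule hb_setI)
    fix u a b assume "(u,a) \<in> M'" "(u,b) \<in> M'"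
    then obtain x1 a1 r1 x2 a2 r2 where h: "(x1,a1)\<in>M" "(x2,a2)\<in>M" "u = x1 + r1 *\<^sub>R z" "a = a1 + r1 * c"
      "u = x2 + r2 *\<^sub>R z" "b = a2 + r2 * c" unfolding M'_def by blast
    have "r1 = r2"
    proof (rule ccontr)
      assume ne: "r1 \<noteq> r2"
      have "x1 - x2 = (r2 - r1) *\<^sub>R z" using h by (simp add: algebra_simps)
      then have "z = (1/(r2 - r1)) *\<^sub>R (x1 - x2)" using ne by simp
      moreover have "((1/(r2-r1)) *\<^sub>R (x1 - x2), (1/(r2-r1)) * (a1 - a2)) \<in> M"
        by (rule scl[OF neg[OF h(1,2)]])
      ultimately show False using nz by simp
    qed
    then have "x1 = x2" using h by simp
    then have "a1 = a2" using fnc h(1,2) by blast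
    then show "a = b" using h \<open>r1 = r2\<close> by simp
  next
    fix u a u' a' assume "(u,a) \<in> M'" "(u',a') \<in> M'"
    then obtain x1 a1 r1 x2 a2 r2 where h: "(x1,a1)\<in>M" "(x2,a2)\<in>M" "u = x1 + r1 *\<^sub>R z" "a = a1 + r1 * c"
      "u' = x2 + r2 *\<^sub>R z" "a' = a2 + r2 * c" unfolding M'_def by blast
    have "u + u' = (x1 + x2) + (r1 + r2) *\<^sub>R z" "a + a' = (a1 + a2) + (r1 + r2) * c"
      using h by (simp_all add: algebra_simps)
    then show "(u + u', a + a') \<in> M'" unfolding M'_def using add[OF h(1,2)] by blast
  next
    fix s u a assume "(u,a) \<in> M'"
    then obtain x1 a1 r1 where h: "(x1,a1)\<in>M" "u = x1 + r1 *\<^sub>R z" "a = a1 + r1 * c"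
      unfolding M'_def by blast
    have "s *\<^sub>R u = s *\<^sub>R x1 + (s * r1) *\<^sub>R z" "s * a = s * a1 + (s * r1) * c"
      using h by (simp_all add: algebra_simps)
    then show "(s *\<^sub>R u, s * a) \<in> M'" unfolding M'_def using scl[OF h(1)] by blast
  next
    fix u a assume "(u,a) \<in> M'"
    then obtain x a1 r where h: "(x,a1)\<in>M" "u = x + r *\<^sub>R z" "a = a1 + r * c"
      unfolding M'_def by blast
    show "a \<le> norm u"
    proof (cases "r = 0")
      case True then show ?thesis using h dom by simp
    next
      case False
      show ?thesis
      proof (cases "r > 0")
        case True
        have "c \<le> norm ((1/r) *\<^sub>R x + z) - (1/r) * a1" using cU[OF scl[OF h(1)]] .
        also have "(1/r) *\<^sub>R x + z = (1/r) *\<^sub>R (x + r *\<^sub>R z)" using True by (simp add: algebra_simps)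
        also have "norm \<dots> = (1/r) * norm (x + r *\<^sub>R z)" using True by simp
        finally have "r * c \<le> r * ((1/r) * norm (x + r *\<^sub>R z) - (1/r) * a1)"
          using True by (simp add: mult_left_mono)
        also have "\<dots> = norm (x + r *\<^sub>R z) - a1" using True by (simp add: field_simps)
        finally show ?thesis using h by simp
      next
        case False
        define s where "s = - r"
        have s: "s > 0" using False \<open>r \<noteq> 0\<close> by (simp add: s_def)
        have "(1/s) * a1 - norm ((1/s) *\<^sub>R x - z) \<le> c" using cL[OF scl[OF h(1)]] .
        also have "(1/s) *\<^sub>R x - z = (1/s) *\<^sub>R (x - s *\<^sub>R z)" using s by (simp add: algebra_simps)
        also have "norm \<dots> = (1/s) * norm (x - s *\<^sub>R z)" using s by simp
        finally have "s * ((1/s) * a1 - (1/s) * norm (x - s *\<^sub>R z)) \<le> s * c"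
          using s by (simp add: mult_left_mono)
        moreover have "s * ((1/s) * a1 - (1/s) * norm (x - s *\<^sub>R z)) = a1 - norm (x - s *\<^sub>R z)"
          using s by (simp add: right_diff_distrib)
        ultimately have "a1 - norm (x - s *\<^sub>R z) \<le> s * c" by simp
        then show ?thesis using h by (simp add: s_def)
      qed
    qed
  next
    have "M \<subseteq> M'"
    proof
      fix p assume p: "p \<in> M"
      obtain x a where "p = (x, a)" by (cases p)
      then have "p = (x + 0 *\<^sub>R z, a + 0 * c)" "(x,a) \<in> M" using p by simp_all
      then show "p \<in> M'" unfolding M'_def by blast
    qed
    with G0M show "{(r *\<^sub>R y, r * norm y) | r. True} \<subseteq> M'" by (rule subset_trans)
  qed
  have MM': "M \<subseteq> M'"
  proof
    fix p assume p: "p \<in> M"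
    obtain x a where "p = (x, a)" by (cases p)
    then have "p = (x + 0 *\<^sub>R z, a + 0 * c)" "(x,a) \<in> M" using p by simp_all
    then show "p \<in> M'" unfolding M'_def by blast
  qed
  have "(z, c) = (0 + 1 *\<^sub>R z, 0 + 1 * c)" by simp
  then have "(z, c) \<in> M'" unfolding M'_def using zero by blast
  then have "M' \<noteq> M" using nz by blast
  then show ?thesis using M'A MM' by blast
qed

lemma real_hb:
  fixes y :: "'a::real_normed_vector"
  shows "\<exists>g::'a \<Rightarrow> real. (\<forall>x x'. g (x + x') = g x + g x') \<and> (\<forall>r x. g (r *\<^sub>R x) = r * g x)
            \<and> (\<forall>x. g x \<le> norm x) \<and> g y = norm y"
proof -
  have "\<forall>C\<in>chains (hb_set y). \<exists>U\<in>hb_set y. \<forall>X\<in>C. X \<subseteq> U" using hb_chain by blast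
  then obtain M where MA: "M \<in> hb_set y" and Mmax: "\<forall>X\<in>hb_set y. M \<subseteq> X \<longrightarrow> X = M"
    by (rule Zorn_Lemma2[THEN bexE])
  have fnc: "a = b" if "(x,a)\<in>M" "(x,b)\<in>M" for x a b using hb_fun[OF MA that] .
  have total: "\<exists>a. (z,a) \<in> M" for z
  proof (rule ccontr)
    assume "\<nexists>a. (z, a) \<in> M"
    then obtain M' where "M' \<in> hb_set y" "M \<subseteq> M'" "M' \<noteq> M" using hb_extend[OF MA] by blast
    then show False using Mmax by blast
  qed
  define g where "g x = (THE a. (x,a) \<in> M)" for x
  have gM: "(x, g x) \<in> M" for x
  proof -
    obtain a where a: "(x,a) \<in> M" using total by blast
    show ?thesis unfolding g_def by (rule theI[of _ a]) (use a fnc in blast)+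
  qed
  have gv: "g x = a" if "(x,a) \<in> M" for x a using fnc[OF gM that] .
  show ?thesis
  proof (intro exI[of _ g] conjI allI)
    show "g (x + x') = g x + g x'" for x x' using gv[OF hb_add[OF MA gM gM]] .
    show "g (r *\<^sub>R x) = r * g x" for r x using gv[OF hb_scl[OF MA gM]] .
    show "g x \<le> norm x" for x using hb_dom[OF MA gM] .
    have "((1::real) *\<^sub>R y, 1 * norm y) \<in> {(r *\<^sub>R y, r * norm y) | r. True}" by blast
    then have "((1::real) *\<^sub>R y, 1 * norm y) \<in> M" using hb_G0sub[OF MA] by (rule subsetD[rotated])
    then have "(y, norm y) \<in> M" by simp
    then show "g y = norm y" by (rule gv)
  qed
qed



lemma conj_linear_add: "conj_linear f \<Longrightarrow> f (x + y) = f x + f y"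
  by (simp add: conj_linear_def)
lemma conj_linear_scaleC: "conj_linear f \<Longrightarrow> f (c *\<^sub>C x) = cnj c * f x"
  by (simp add: conj_linear_def)
lemma conj_linear_scaleR: "conj_linear f \<Longrightarrow> f (r *\<^sub>R x) = r *\<^sub>R f x"
  by (simp add: scaleR_scaleC conj_linear_def scaleR_conv_of_real)
lemma conj_linear_zero: "conj_linear f \<Longrightarrow> f 0 = 0"
  using conj_linear_scaleR[of f 0 0] by simp
lemma conj_linear_minus: "conj_linear f \<Longrightarrow> f (- x) = - f x"
  using conj_linear_scaleR[of f "-1" x] by simp
lemma conj_linear_diff: "conj_linear f \<Longrightarrow> f (x - y) = f x - f y"
  using conj_linear_add[of f x "- y"] conj_linear_minus[of f y] by simp

lemma cdualD: "f \<in> cdual \<Longrightarrow> conj_linear f" "f \<in> cdual \<Longrightarrow> continuous_on UNIV f"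
  unfolding cdual_def by auto

lemma cdual_bounded:
  assumes "f \<in> cdual" shows "\<exists>K>0. \<forall>x. norm (f x) \<le> K * norm x"
  using cont_scale_bound[of UNIV f] cdualD[OF assms] conj_linear_scaleR by auto

lemma zero_on_dense:
  fixes h :: "'a::real_normed_vector \<Rightarrow> 'b::real_normed_vector"
  assumes "continuous_on UNIV h" "closure S = UNIV" "\<And>x. x \<in> S \<Longrightarrow> h x = 0"
  shows "h x = 0"
  using continuous_constant_on_closure[of S h 0 x] assms by auto

lemma cdual_eq_on_dense:
  assumes "f \<in> cdual" "g \<in> cdual" "closure S = UNIV" "\<And>x. x \<in> S \<Longrightarrow> f x = g x"
  shows "f = g"
proof
  fix x
  have "continuous_on UNIV (\<lambda>x. f x - g x)" using cdualD assms by (intro continuous_intros) auto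
  then have "f x - g x = 0" using zero_on_dense[of "\<lambda>x. f x - g x" S x] assms by auto
  then show "f x = g x" by simp
qed

lemma cdual_add: "f \<in> cdual \<Longrightarrow> g \<in> cdual \<Longrightarrow> (\<lambda>x. f x + g x) \<in> cdual"
  unfolding cdual_def conj_linear_def by (auto intro!: continuous_intros simp: algebra_simps)

lemma cdual_scale: "f \<in> cdual \<Longrightarrow> (\<lambda>x. c * f x) \<in> cdual"
  unfolding cdual_def conj_linear_def by (auto intro!: continuous_intros simp: algebra_simps)

lemma cont_compose_UNIV: "continuous_on UNIV f \<Longrightarrow> continuous_on UNIV h \<Longrightarrow> continuous_on UNIV (\<lambda>x. f (h x))"
  by (rule continuous_on_compose2[of UNIV f UNIV h]) auto

lemma scaleC_cont: "continuous_on UNIV (\<lambda>x::'a::cnormed_vector. c *\<^sub>C x)"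
  by (rule bounded_linear.continuous_on[OF scaleC_bounded_linear continuous_on_id])

lemma scaleC_decomp: "c *\<^sub>C (u::'a::cnormed_vector) = Re c *\<^sub>R u + Im c *\<^sub>R (\<i> *\<^sub>C u)"
proof -
  have "c = complex_of_real (Re c) + complex_of_real (Im c) * \<i>" by (simp add: complex_eq_iff)
  then have "c *\<^sub>C u = complex_of_real (Re c) *\<^sub>C u + (complex_of_real (Im c) * \<i>) *\<^sub>C u"
    by (metis scaleC_add_left)
  also have "\<dots> = Re c *\<^sub>R u + Im c *\<^sub>R (\<i> *\<^sub>C u)"
    by (simp add: scaleC_of_real scaleC_scaleC[symmetric])
  finally show ?thesis .
qed

lemma ii_scaleC_ii: "\<i> *\<^sub>C (\<i> *\<^sub>C (u::'a::cnormed_vector)) = - u"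
  by (simp add: scaleC_scaleC scaleC_minus_one)

lemma separation:
  fixes y :: "'a::cnormed_vector"
  assumes "y \<noteq> 0"
  shows "\<exists>f\<in>cdual. f y \<noteq> 0"
proof -
  obtain g :: "'a \<Rightarrow> real" where G: "(\<forall>x x'. g (x + x') = g x + g x') \<and> (\<forall>r x. g (r *\<^sub>R x) = r * g x)
            \<and> (\<forall>x. g x \<le> norm x) \<and> g y = norm y"
    using real_hb[of y] by (rule exE)
  have gadd: "\<And>x x'. g (x + x') = g x + g x'" and gs: "\<And>r x. g (r *\<^sub>R x) = r * g x"
    and gn: "\<And>x. g x \<le> norm x" and gy: "g y = norm y" using G by simp_all
  have gneg: "g (- x) = - g x" for x using gs[of "-1" x] by simp
  have gabs: "norm (g x) \<le> norm x * 1" for x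
  proof -
    have "- g x = g (- x)" using gneg by simp
    also have "\<dots> \<le> norm x" using gn[of "-x"] by simp
    finally show ?thesis using gn[of x] by simp
  qed
  have bl1: "bounded_linear g" by (rule bounded_linear_intro[OF gadd _ gabs]) (simp add: gs)
  have bl2: "bounded_linear (\<lambda>x. g (\<i> *\<^sub>C x))"
  proof (rule bounded_linear_intro[where K=1])
    show "g (\<i> *\<^sub>C (x + x')) = g (\<i> *\<^sub>C x) + g (\<i> *\<^sub>C x')" for x x' by (simp only: scaleC_add_right gadd)
    show "g (\<i> *\<^sub>C (r *\<^sub>R x)) = r *\<^sub>R g (\<i> *\<^sub>C x)" for r x by (simp only: scaleC_scaleR_comm gs real_scaleR_def)
    show "norm (g (\<i> *\<^sub>C x)) \<le> norm x * 1" for x using gabs[of "\<i> *\<^sub>C x"] by (simp add: norm_scaleC)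
  qed
  define f where "f x = complex_of_real (g x) + \<i> * complex_of_real (g (\<i> *\<^sub>C x))" for x
  have gdec: "g (c *\<^sub>C u) = Re c * g u + Im c * g (\<i> *\<^sub>C u)" for c u
  proof -
    have "g (c *\<^sub>C u) = g (Re c *\<^sub>R u + Im c *\<^sub>R (\<i> *\<^sub>C u))" by (rule arg_cong[where f=g, OF scaleC_decomp])
    also have "\<dots> = Re c * g u + Im c * g (\<i> *\<^sub>C u)" by (simp only: gadd gs)
    finally show ?thesis .
  qed
  have cl: "conj_linear f"
    unfolding conj_linear_def
  proof (intro conjI allI)
    show "f (x + x') = f x + f x'" for x x' by (simp add: f_def scaleC_add_right gadd algebra_simps)
    fix c x
    have 1: "g (c *\<^sub>C x) = Re c * g x + Im c * g (\<i> *\<^sub>C x)" by (rule gdec)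
    have e: "\<i> *\<^sub>C (c *\<^sub>C x) = c *\<^sub>C (\<i> *\<^sub>C x)" by (metis scaleC_scaleC mult.commute)
    have "g (\<i> *\<^sub>C (c *\<^sub>C x)) = Re c * g (\<i> *\<^sub>C x) + Im c * g (\<i> *\<^sub>C (\<i> *\<^sub>C x))"
      unfolding e by (rule gdec)
    also have "g (\<i> *\<^sub>C (\<i> *\<^sub>C x)) = - g x" by (simp only: ii_scaleC_ii gneg)
    finally have 2: "g (\<i> *\<^sub>C (c *\<^sub>C x)) = Re c * g (\<i> *\<^sub>C x) - Im c * g x" by simp
    show "f (c *\<^sub>C x) = cnj c * f x"
      unfolding f_def 1 2 by (simp add: complex_eq_iff algebra_simps)
  qed
  have c1: "continuous_on UNIV g" by (rule bounded_linear.continuous_on[OF bl1 continuous_on_id])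
  have c2: "continuous_on UNIV (\<lambda>x. g (\<i> *\<^sub>C x))" by (rule bounded_linear.continuous_on[OF bl2 continuous_on_id])
  have "continuous_on UNIV f"
    unfolding f_def by (intro continuous_on_add continuous_on_mult continuous_on_const continuous_on_of_real c1 c2)
  then have "f \<in> cdual" using cl unfolding cdual_def by blast
  moreover have "Re (f y) \<noteq> 0" using gy assms by (simp add: f_def)
  then have "f y \<noteq> 0" by (metis zero_complex.sel(1))
  ultimately show ?thesis by auto
qed

lemma extend_dense:
  fixes g :: "'a::{cnormed_vector,banach} \<Rightarrow> complex"
  assumes S: "complex_subspace S" and dS: "closure S = UNIV"
    and gadd: "\<And>x y. x\<in>S \<Longrightarrow> y\<in>S \<Longrightarrow> g (x + y) = g x + g y"
    and gsc: "\<And>c x. x\<in>S \<Longrightarrow> g (c *\<^sub>C x) = cnj c * g x"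
    and gc: "continuous_on S g"
  shows "\<exists>f\<in>cdual. \<forall>x\<in>S. f x = g x"
proof -
  have S0: "0 \<in> S" and Sadd: "\<And>x y. x\<in>S \<Longrightarrow> y\<in>S \<Longrightarrow> x + y \<in> S" and Ssc: "\<And>c x. x\<in>S \<Longrightarrow> c *\<^sub>C x \<in> S"
    using S unfolding complex_subspace_def by auto
  have SR: "r *\<^sub>R x \<in> S" if "x \<in> S" for r x using Ssc[OF that] by (simp add: scaleR_scaleC)
  have gR: "g (r *\<^sub>R x) = r *\<^sub>R g x" if "x \<in> S" for r x
    using gsc[OF that, of "complex_of_real r"] by (simp add: scaleR_scaleC scaleR_conv_of_real)
  obtain K where K: "K > 0" "\<forall>x\<in>S. norm (g x) \<le> K * norm x"
    using cont_scale_bound[of S g, OF SR gR gc S0] by blast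
  have Sdiff: "x - y \<in> S" if "x \<in> S" "y \<in> S" for x y
    using Sadd[OF that(1) SR[OF that(2), of "-1"]] by simp
  have gdiff: "g (x - y) = g x - g y" if "x \<in> S" "y \<in> S" for x y
    using gadd[OF that(1) SR[OF that(2), of "-1"]] gR[OF that(2), of "-1"] by simp
  have uc: "uniformly_continuous_on S g"
    unfolding uniformly_continuous_on_def
  proof (intro allI impI)
    fix e :: real assume e: "e > 0"
    show "\<exists>d>0. \<forall>x\<in>S. \<forall>x'\<in>S. dist x' x < d \<longrightarrow> dist (g x') (g x) < e"
    proof (intro exI[of _ "e / K"] conjI ballI impI)
      show "e / K > 0" using e K by simp
      fix x x' assume xs: "x \<in> S" "x' \<in> S" and d: "dist x' x < e / K"
      have "dist (g x') (g x) = norm (g (x' - x))" using gdiff[OF xs(2,1)] by (simp add: dist_norm)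
      also have "\<dots> \<le> K * norm (x' - x)" using K Sdiff[OF xs(2,1)] by blast
      also have "\<dots> < K * (e / K)" using d K(1) by (intro mult_strict_left_mono) (simp_all add: dist_norm)
      also have "\<dots> = e" using K by simp
      finally show "dist (g x') (g x) < e" .
    qed
  qed
  obtain f where fu: "uniformly_continuous_on (closure S) f" and fg: "\<And>x. x \<in> S \<Longrightarrow> g x = f x"
    using uniformly_continuous_on_extension_on_closure[OF uc] by metis
  have fc: "continuous_on UNIV f" using uniformly_continuous_imp_continuous[OF fu] dS by simp
  have fadd1: "f (x + y) = f x + f y" if "y \<in> S" for x y
  proof -
    have "continuous_on UNIV (\<lambda>x. f (x + y) - f x - f y)"
      by (intro continuous_intros cont_compose_UNIV[OF fc] fc)
    then have "f (x + y) - f x - f y = 0"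
      by (rule zero_on_dense[OF _ dS]) (use fg gadd Sadd that in auto)
    then show ?thesis by (simp add: diff_eq_eq add.commute)
  qed
  have fadd: "f (x + y) = f x + f y" for x y
  proof -
    have "continuous_on UNIV (\<lambda>y. f (x + y) - f x - f y)"
      by (intro continuous_intros cont_compose_UNIV[OF fc] fc)
    then have "f (x + y) - f x - f y = 0"
      by (rule zero_on_dense[OF _ dS]) (use fadd1 in auto)
    then show ?thesis by (simp add: diff_eq_eq add.commute)
  qed
  have fsc: "f (c *\<^sub>C x) = cnj c * f x" for c x
  proof -
    have "continuous_on UNIV (\<lambda>x. f (c *\<^sub>C x) - cnj c * f x)"
      by (intro continuous_intros cont_compose_UNIV[OF fc] fc scaleC_cont)
    then have "f (c *\<^sub>C x) - cnj c * f x = 0"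
      by (rule zero_on_dense[OF _ dS]) (use fg gsc Ssc in auto)
    then show ?thesis by simp
  qed
  have "f \<in> cdual" unfolding cdual_def conj_linear_def using fadd fsc fc by blast
  then show ?thesis using fg by metis
qed



locale fsetup =
  fixes D :: "'a::{cnormed_vector, banach} set" and t :: "'a \<Rightarrow> 'a \<Rightarrow> complex" and \<gamma> :: real
  assumes sub: "complex_subspace D" and dense: "closure D = UNIV" and ses: "sesquilinear_on D t"
    and gpos: "\<gamma> > 0" and coer: "\<forall>x\<in>D. Im (t x x) = 0 \<and> \<gamma> * (norm x)\<^sup>2 \<le> Re (t x x)"
    and compl: "form_complete D t"
begin

definition q where "q x = Re (t x x)"

lemma D0: "0 \<in> D" using sub unfolding complex_subspace_def by simp
lemma Dadd: "x \<in> D \<Longrightarrow> y \<in> D \<Longrightarrow> x + y \<in> D" using sub unfolding complex_subspace_def by simp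
lemma Dsc: "x \<in> D \<Longrightarrow> c *\<^sub>C x \<in> D" using sub unfolding complex_subspace_def by simp
lemma DR: "x \<in> D \<Longrightarrow> r *\<^sub>R x \<in> D" using Dsc[of x "complex_of_real r"] by (simp add: scaleC_of_real)
lemma Dminus: "x \<in> D \<Longrightarrow> - x \<in> D" using DR[of x "-1"] by simp
lemma Ddiff: "x \<in> D \<Longrightarrow> y \<in> D \<Longrightarrow> x - y \<in> D" using Dadd[OF _ Dminus, of x y] by simp

lemma tadd1: "x \<in> D \<Longrightarrow> x' \<in> D \<Longrightarrow> y \<in> D \<Longrightarrow> t (x + x') y = t x y + t x' y"
  using ses unfolding sesquilinear_on_def by simp
lemma tsc1: "x \<in> D \<Longrightarrow> y \<in> D \<Longrightarrow> t (c *\<^sub>C x) y = c * t x y"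
  using ses unfolding sesquilinear_on_def by simp
lemma tadd2: "x \<in> D \<Longrightarrow> y \<in> D \<Longrightarrow> y' \<in> D \<Longrightarrow> t x (y + y') = t x y + t x y'"
  using ses unfolding sesquilinear_on_def by simp
lemma tsc2: "x \<in> D \<Longrightarrow> y \<in> D \<Longrightarrow> t x (c *\<^sub>C y) = cnj c * t x y"
  using ses unfolding sesquilinear_on_def by simp
lemma tR1: "x \<in> D \<Longrightarrow> y \<in> D \<Longrightarrow> t (r *\<^sub>R x) y = r * t x y"
  using tsc1[of x y "complex_of_real r"] by (simp add: scaleC_of_real)
lemma tR2: "x \<in> D \<Longrightarrow> y \<in> D \<Longrightarrow> t x (r *\<^sub>R y) = r * t x y"
  using tsc2[of x y "complex_of_real r"] by (simp add: scaleC_of_real)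
lemma tminus1: "x \<in> D \<Longrightarrow> y \<in> D \<Longrightarrow> t (- x) y = - t x y"
  using tR1[of x y "-1"] by simp
lemma tminus2: "x \<in> D \<Longrightarrow> y \<in> D \<Longrightarrow> t x (- y) = - t x y"
  using tR2[of x y "-1"] by simp
lemma tdiff1: "x \<in> D \<Longrightarrow> x' \<in> D \<Longrightarrow> y \<in> D \<Longrightarrow> t (x - x') y = t x y - t x' y"
  using tadd1[OF _ Dminus, of x x' y] tminus1[of x' y] by simp
lemma tdiff2: "x \<in> D \<Longrightarrow> y \<in> D \<Longrightarrow> y' \<in> D \<Longrightarrow> t x (y - y') = t x y - t x y'"
  using tadd2[OF _ _ Dminus, of x y y'] tminus2[of x y'] by simp
lemma tzero1: "y \<in> D \<Longrightarrow> t 0 y = 0" using tR1[OF D0, of y 0] by simp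
lemma tzero2: "x \<in> D \<Longrightarrow> t x 0 = 0" using tR2[OF _ D0, of x 0] by simp

lemma imzero: "x \<in> D \<Longrightarrow> Im (t x x) = 0" using coer by simp
lemma qge: "x \<in> D \<Longrightarrow> \<gamma> * (norm x)\<^sup>2 \<le> q x" using coer by (simp add: q_def)
lemma qnn: "x \<in> D \<Longrightarrow> 0 \<le> q x" using qge[of x] gpos by (meson order_trans zero_le_mult_iff zero_le_power2 less_imp_le)
lemma treal: "x \<in> D \<Longrightarrow> t x x = complex_of_real (q x)" using imzero[of x] by (simp add: q_def complex_eq_iff)

lemma expand: "x \<in> D \<Longrightarrow> y \<in> D \<Longrightarrow> t (x + y) (x + y) = t x x + t x y + t y x + t y y"
  by (simp add: tadd1 tadd2 Dadd)

lemma herm: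
  assumes x: "x \<in> D" and y: "y \<in> D" shows "t y x = cnj (t x y)"
proof -
  have 1: "Im (t x y + t y x) = 0"
    using imzero[OF Dadd[OF x y]] imzero[OF x] imzero[OF y] expand[OF x y] by simp
  have iy: "\<i> *\<^sub>C y \<in> D" using Dsc[OF y] .
  have "t (x + \<i> *\<^sub>C y) (x + \<i> *\<^sub>C y) = t x x + t x (\<i> *\<^sub>C y) + t (\<i> *\<^sub>C y) x + t (\<i> *\<^sub>C y) (\<i> *\<^sub>C y)"
    by (rule expand[OF x iy])
  also have "\<dots> = t x x - \<i> * t x y + \<i> * t y x + t y y"
    using tsc1[OF y x, of \<i>] tsc2[OF x y, of \<i>] tsc1[OF y iy, of \<i>] tsc2[OF y y, of \<i>] by simp
  finally have 2: "Im (- \<i> * t x y + \<i> * t y x) = 0"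
    using imzero[OF Dadd[OF x iy]] imzero[OF x] imzero[OF y] by simp
  show ?thesis using 1 2 by (simp add: complex_eq_iff)
qed

lemma Re_herm: assumes "x \<in> D" "y \<in> D" shows "Re (t y x) = Re (t x y)"
  using herm[OF assms] by simp

lemma qexpand: "x \<in> D \<Longrightarrow> y \<in> D \<Longrightarrow> q (x + y) = q x + 2 * Re (t x y) + q y"
  using expand[of x y] Re_herm[of x y] by (simp add: q_def)

lemma qexpand_diff: "x \<in> D \<Longrightarrow> y \<in> D \<Longrightarrow> q (x - y) = q x - 2 * Re (t x y) + q y"
proof -
  assume x: "x \<in> D" and y: "y \<in> D"
  have "q (x + - y) = q x + 2 * Re (t x (- y)) + q (- y)" by (rule qexpand[OF x Dminus[OF y]])
  moreover have "q (- y) = q y" using tminus1[OF y Dminus[OF y]] tminus2[OF y y] by (simp add: q_def)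
  ultimately show ?thesis using tminus2[OF x y] by simp
qed

lemma qscale: "x \<in> D \<Longrightarrow> q (r *\<^sub>R x) = r^2 * q x"
  using tR1[OF _ DR, of x x r r] tR2[of x x r] by (simp add: q_def power2_eq_square)

lemma Re_bound: "x \<in> D \<Longrightarrow> y \<in> D \<Longrightarrow> 2 * Re (t x y) \<le> q x + q y"
  using qexpand_diff[of x y] qnn[OF Ddiff, of x y] by simp

lemma norm_le_q: "x \<in> D \<Longrightarrow> (norm x)\<^sup>2 \<le> q x / \<gamma>"
  using qge[of x] gpos by (simp add: field_simps)

end



context fsetup begin

lemma nonpos_quad:
  fixes A Q :: real
  assumes Q: "Q \<ge> 0" and all: "\<And>s. 0 \<le> 2 * s * A + 2 * s\<^sup>2 * Q"
  shows "A = 0"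
proof (rule ccontr)
  assume A: "A \<noteq> 0"
  define u where "u = 2 * Q + 1"
  have u: "u > 0" using Q by (simp add: u_def)
  have "0 \<le> 2 * (- A / u) * A + 2 * (- A / u)\<^sup>2 * Q" by (rule all)
  also have "2 * (- A / u) * A + 2 * (- A / u)\<^sup>2 * Q = (2 * A\<^sup>2 / u\<^sup>2) * (Q - u)"
    using u by (simp add: field_simps power2_eq_square)
  also have "\<dots> < 0"
  proof (rule mult_pos_neg)
    show "0 < 2 * A\<^sup>2 / u\<^sup>2" using A u by simp
    show "Q - u < 0" using Q by (simp add: u_def)
  qed
  finally show False by simp
qed

lemma minimize:
  assumes K: "complex_subspace K" "K \<subseteq> D"
    and ladd: "\<And>x y. x \<in> K \<Longrightarrow> y \<in> K \<Longrightarrow> l (x + y) = l x + l y"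
    and lsc: "\<And>c x. x \<in> K \<Longrightarrow> l (c *\<^sub>C x) = cnj c * l x"
    and bdd: "\<And>m. m \<in> K \<Longrightarrow> B \<le> q m - 2 * Re (l m)"
  shows "\<exists>w\<in>D. (\<exists>m. (\<forall>n. m n \<in> K) \<and> (\<lambda>n. q (m n - w)) \<longlonglongrightarrow> 0) \<and> (\<forall>h\<in>K. t w h = l h)"
proof -
  have K0: "0 \<in> K" and Kadd: "\<And>x y. x\<in>K \<Longrightarrow> y\<in>K \<Longrightarrow> x + y \<in> K" and Ksc: "\<And>c x. x\<in>K \<Longrightarrow> c *\<^sub>C x \<in> K"
    using K(1) unfolding complex_subspace_def by auto
  have KR: "r *\<^sub>R x \<in> K" if "x \<in> K" for r x using Ksc[OF that, of "complex_of_real r"] by (simp add: scaleC_of_real)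
  have KD: "x \<in> K \<Longrightarrow> x \<in> D" for x using K(2) by (rule subsetD)
  have lR: "l (r *\<^sub>R x) = r * l x" if "x \<in> K" for r x
    using lsc[OF that, of "complex_of_real r"] by (simp add: scaleC_of_real)
  define \<Phi> where "\<Phi> m = q m - 2 * Re (l m)" for m
  define d where "d = Inf (\<Phi> ` K)"
  have ne: "\<Phi> ` K \<noteq> {}" using K0 by auto
  have bb: "bdd_below (\<Phi> ` K)" using bdd by (auto simp: \<Phi>_def intro!: bdd_belowI[of _ B])
  have dle: "d \<le> \<Phi> m" if "m \<in> K" for m unfolding d_def using that bb by (simp add: cInf_lower)
  have "\<forall>n. \<exists>m. m \<in> K \<and> \<Phi> m < d + inverse (real (Suc n))"
  proof
    fix n
    have "Inf (\<Phi> ` K) < d + inverse (real (Suc n))" by (simp add: d_def)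
    then obtain v where "v \<in> \<Phi> ` K" "v < d + inverse (real (Suc n))" using cInf_lessD[OF ne] by blast
    then show "\<exists>m. m \<in> K \<and> \<Phi> m < d + inverse (real (Suc n))" by auto
  qed
  then obtain m where mK: "\<And>n. m n \<in> K" and mlt: "\<And>n. \<Phi> (m n) < d + inverse (real (Suc n))"
    by metis
  have mD: "m n \<in> D" for n using KD[OF mK] .
  have para: "q (a - b) = 2 * \<Phi> a + 2 * \<Phi> b - 4 * \<Phi> ((1/2) *\<^sub>R (a + b))" if a: "a \<in> K" and b: "b \<in> K" for a b
  proof -
    have aD: "a \<in> D" and bD: "b \<in> D" using KD a b by auto
    have e1: "q ((1/2) *\<^sub>R (a + b)) = (1/4) * q (a + b)"
      using qscale[OF Dadd[OF aD bD], of "1/2"] by (simp add: power2_eq_square)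
    have lm: "l ((1/2) *\<^sub>R (a + b)) = (1/2) * (l a + l b)" using lR[OF Kadd[OF a b]] ladd[OF a b] by simp
    have e2: "Re (l ((1/2) *\<^sub>R (a + b))) = (Re (l a) + Re (l b)) / 2"
      using arg_cong[where f=Re, OF lm] by (simp del: scaleR_right_distrib)
    have p1: "\<Phi> ((1/2) *\<^sub>R (a + b)) = (1/4) * q (a + b) - (Re (l a) + Re (l b))"
      unfolding \<Phi>_def e1 e2 by (simp add: field_simps)
    have p2: "\<Phi> a = q a - 2 * Re (l a)" "\<Phi> b = q b - 2 * Re (l b)" unfolding \<Phi>_def by simp_all
    have "q (a + b) = q a + 2 * Re (t a b) + q b" by (rule qexpand[OF aD bD])
    moreover have "q (a - b) = q a - 2 * Re (t a b) + q b" by (rule qexpand_diff[OF aD bD])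
    ultimately show ?thesis using p1 p2 by linarith
  qed
  have mid: "(1/2) *\<^sub>R (a + b) \<in> K" if "a \<in> K" "b \<in> K" for a b using KR[OF Kadd[OF that]] .
  have cauchy_est: "q (m i - m j) \<le> 2 * inverse (real (Suc i)) + 2 * inverse (real (Suc j))" for i j
  proof -
    have "q (m i - m j) = 2 * \<Phi> (m i) + 2 * \<Phi> (m j) - 4 * \<Phi> ((1/2) *\<^sub>R (m i + m j))" by (rule para[OF mK mK])
    moreover have "d \<le> \<Phi> ((1/2) *\<^sub>R (m i + m j))" by (rule dle[OF mid[OF mK mK]])
    ultimately show ?thesis using mlt[of i] mlt[of j] by linarith
  qed
  have "\<exists>w\<in>D. (\<lambda>n. sqrt (Re (t (m n - w) (m n - w)))) \<longlonglongrightarrow> 0"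
  proof -
    have "\<forall>e>0. \<exists>N. \<forall>i\<ge>N. \<forall>j\<ge>N. sqrt (Re (t (m i - m j) (m i - m j))) < e"
    proof (intro allI impI)
      fix e :: real assume e: "e > 0"
      obtain N :: nat where N: "4 / e\<^sup>2 < real N" using reals_Archimedean2 by blast
      show "\<exists>N. \<forall>i\<ge>N. \<forall>j\<ge>N. sqrt (Re (t (m i - m j) (m i - m j))) < e"
      proof (intro exI[of _ N] allI impI)
        fix i j assume ij: "N \<le> i" "N \<le> j"
        have Npos: "real N > 0" using N e by (smt (verit) divide_nonneg_pos zero_less_power)
        have "inverse (real (Suc i)) \<le> inverse (real N)" using ij Npos by (simp add: le_imp_inverse_le)
        moreover have "inverse (real (Suc j)) \<le> inverse (real N)" using ij Npos by (simp add: le_imp_inverse_le)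
        ultimately have "q (m i - m j) \<le> 4 * inverse (real N)" using cauchy_est[of i j] by linarith
        also have "4 * inverse (real N) < e\<^sup>2" using N e Npos by (simp add: field_simps)
        finally have "q (m i - m j) < e\<^sup>2" .
        then have "sqrt (q (m i - m j)) < sqrt (e\<^sup>2)" by (rule real_sqrt_less_mono)
        then show "sqrt (Re (t (m i - m j) (m i - m j))) < e" using e by (simp add: q_def)
      qed
    qed
    then show ?thesis using compl mD unfolding form_complete_def by blast
  qed
  then obtain w where wD: "w \<in> D" and wlim: "(\<lambda>n. sqrt (q (m n - w))) \<longlonglongrightarrow> 0"
    unfolding q_def by blast
  have qlim: "(\<lambda>n. q (m n - w)) \<longlonglongrightarrow> 0"
  proof -
    have "(\<lambda>n. (sqrt (q (m n - w)))\<^sup>2) \<longlonglongrightarrow> 0\<^sup>2" by (rule tendsto_power[OF wlim])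
    moreover have "(sqrt (q (m n - w)))\<^sup>2 = q (m n - w)" for n using qnn[OF Ddiff[OF mD wD]] by simp
    ultimately show ?thesis by simp
  qed
  have var: "Re (t w h - l h) = 0" if h: "h \<in> K" for h
  proof -
    have hD: "h \<in> D" using KD h .
    let ?A = "Re (t w h - l h)"
    have "0 \<le> 2 * s * ?A + 2 * s\<^sup>2 * q h" for s :: real
    proof -
      have bound: "- inverse (real (Suc n)) - q (m n - w) \<le> 2 * s * ?A + 2 * s\<^sup>2 * q h" for n
      proof -
        have shK: "s *\<^sub>R h \<in> K" using KR[OF h] .
        have shD: "s *\<^sub>R h \<in> D" using KD shK .
        have "d \<le> \<Phi> (m n + s *\<^sub>R h)" by (rule dle[OF Kadd[OF mK shK]])
        also have "\<Phi> (m n + s *\<^sub>R h) = \<Phi> (m n) + 2 * s * Re (t (m n) h) + s\<^sup>2 * q h - 2 * s * Re (l h)"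
          using qexpand[OF mD shD] qscale[OF hD, of s] tR2[OF mD hD, where r=s] ladd[OF mK shK] lR[OF h, of s]
          by (simp add: \<Phi>_def algebra_simps)
        finally have 1: "d \<le> \<Phi> (m n) + 2 * s * Re (t (m n) h) + s\<^sup>2 * q h - 2 * s * Re (l h)" .
        have 2: "t (m n) h = t w h + t (m n - w) h" using tdiff1[OF mD wD hD] by simp
        have "2 * Re (t (m n - w) (s *\<^sub>R h)) \<le> q (m n - w) + q (s *\<^sub>R h)"
          by (rule Re_bound[OF Ddiff[OF mD wD] shD])
        then have 3: "2 * s * Re (t (m n - w) h) \<le> q (m n - w) + s\<^sup>2 * q h"
          using tR2[OF Ddiff[OF mD wD] hD, where r=s] qscale[OF hD, of s] by simp
        show ?thesis using 1 2 3 mlt[of n] by (simp add: algebra_simps)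
      qed
      have "(\<lambda>n. - inverse (real (Suc n)) - q (m n - w)) \<longlonglongrightarrow> - 0 - 0"
        by (intro tendsto_diff tendsto_minus LIMSEQ_inverse_real_of_nat qlim)
      then show ?thesis using bound by (intro LIMSEQ_le_const2) auto
    qed
    then show ?thesis by (rule nonpos_quad[OF qnn[OF hD]])
  qed
  have "t w h = l h" if h: "h \<in> K" for h
  proof -
    have hD: "h \<in> D" using KD h .
    have 1: "Re (t w h - l h) = 0" by (rule var[OF h])
    have "Re (t w (\<i> *\<^sub>C h) - l (\<i> *\<^sub>C h)) = 0" by (rule var[OF Ksc[OF h]])
    then have 2: "Im (t w h - l h) = 0" using tsc2[OF wD hD, of \<i>] lsc[OF h, of \<i>] by simp
    show ?thesis using 1 2 by (simp add: complex_eq_iff)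
  qed
  then show ?thesis using wD mK qlim by blast
qed

end


context fsetup begin

lemma amgm: "2 * C * a \<le> \<gamma> * a\<^sup>2 + C\<^sup>2 / \<gamma>"
proof -
  have "0 \<le> (\<gamma> * a - C)\<^sup>2" by simp
  then have "2 * C * a * \<gamma> \<le> (\<gamma> * a)\<^sup>2 + C\<^sup>2" by (simp add: power2_eq_square algebra_simps)
  then have "2 * C * a \<le> ((\<gamma> * a)\<^sup>2 + C\<^sup>2) / \<gamma>" using gpos by (simp add: pos_le_divide_eq)
  also have "((\<gamma> * a)\<^sup>2 + C\<^sup>2) / \<gamma> = \<gamma> * a\<^sup>2 + C\<^sup>2 / \<gamma>" using gpos by (simp add: power2_eq_square field_simps)
  finally show ?thesis .
qed

lemma riesz:
  assumes f: "f \<in> cdual" shows "\<exists>x\<in>D. \<forall>h\<in>D. t x h = f h"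
proof -
  obtain C where C: "C > 0" "\<And>x. norm (f x) \<le> C * norm x" using cdual_bounded[OF f] by blast
  have cl: "conj_linear f" using cdualD(1)[OF f] .
  have "\<exists>w\<in>D. (\<exists>m. (\<forall>n. m n \<in> D) \<and> (\<lambda>n. q (m n - w)) \<longlonglongrightarrow> 0) \<and> (\<forall>h\<in>D. t w h = f h)"
  proof (rule minimize[OF sub subset_refl])
    show "f (x + y) = f x + f y" for x y using conj_linear_add[OF cl] .
    show "f (c *\<^sub>C x) = cnj c * f x" for c x using conj_linear_scaleC[OF cl] .
    fix m assume m: "m \<in> D"
    have "2 * Re (f m) \<le> 2 * C * norm m" using complex_Re_le_cmod[of "f m"] C(2)[of m] by linarith
    also have "\<dots> \<le> \<gamma> * (norm m)\<^sup>2 + C\<^sup>2 / \<gamma>" by (rule amgm)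
    also have "\<dots> \<le> q m + C\<^sup>2 / \<gamma>" using qge[OF m] by simp
    finally show "- (C\<^sup>2 / \<gamma>) \<le> q m - 2 * Re (f m)" by simp
  qed
  then show ?thesis by blast
qed

abbreviation "dm \<equiv> form_dom D t"
abbreviation "A \<equiv> form_op D t"

lemma dmD: "x \<in> dm \<Longrightarrow> x \<in> D" unfolding form_dom_def by simp

lemma op_char:
  assumes z: "z \<in> cdual" and zt: "\<And>y. y \<in> D \<Longrightarrow> z y = t x y"
  shows "A x = z"
  unfolding form_op_def
proof (rule the_equality)
  show "z \<in> cdual \<and> (\<forall>y\<in>D. z y = t x y)" using z zt by simp
  fix z' assume "z' \<in> cdual \<and> (\<forall>y\<in>D. z' y = t x y)"
  then show "z' = z" using cdual_eq_on_dense[OF _ z dense, of z'] zt by simp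
qed

lemma opdom:
  assumes x: "x \<in> dm" shows "A x \<in> cdual" "\<And>y. y \<in> D \<Longrightarrow> A x y = t x y"
proof -
  have xD: "x \<in> D" and c: "continuous_on D (t x)" using x unfolding form_dom_def by auto
  obtain z where z: "z \<in> cdual" "\<forall>y\<in>D. z y = t x y"
    using extend_dense[OF sub dense, of "t x"] tadd2[OF xD] tsc2[OF xD] c by blast
  have "A x = z" by (rule op_char) (use z in auto)
  then show "A x \<in> cdual" "\<And>y. y \<in> D \<Longrightarrow> A x y = t x y" using z by auto
qed

lemma Rdom:
  assumes f: "f \<in> cdual" shows "\<exists>x\<in>dm. A x = f \<and> (\<forall>h\<in>D. t x h = f h)"
proof -
  obtain x where xD: "x \<in> D" and xt: "\<forall>h\<in>D. t x h = f h" using riesz[OF f] by blast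
  have "continuous_on D f" using cdualD(2)[OF f] by (rule continuous_on_subset) simp
  then have "continuous_on D (t x)" by (rule continuous_on_eq) (use xt in simp)
  then have "x \<in> dm" using xD unfolding form_dom_def by simp
  moreover have "A x = f" by (rule op_char[OF f]) (use xt in simp)
  ultimately show ?thesis using xt by blast
qed

lemma dm_sub: "complex_subspace dm"
  unfolding complex_subspace_def
proof (intro conjI ballI allI)
  have "continuous_on D (t 0)"
  proof -
    have "continuous_on D (\<lambda>y. 0::complex)" by simp
    then show ?thesis by (rule continuous_on_eq) (simp add: tzero1)
  qed
  then show "0 \<in> dm" unfolding form_dom_def using D0 by simp
next
  fix x y assume x: "x \<in> dm" and y: "y \<in> dm"
  have xD: "x \<in> D" and cx: "continuous_on D (t x)" using x unfolding form_dom_def by auto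
  have yD: "y \<in> D" and cy: "continuous_on D (t y)" using y unfolding form_dom_def by auto
  have "continuous_on D (\<lambda>h. t x h + t y h)" using cx cy by (rule continuous_on_add)
  then have "continuous_on D (t (x + y))"
    by (rule continuous_on_eq) (simp add: tadd1[OF xD yD])
  then show "x + y \<in> dm" unfolding form_dom_def using Dadd[OF xD yD] by simp
next
  fix c x assume x: "x \<in> dm"
  have xD: "x \<in> D" and cx: "continuous_on D (t x)" using x unfolding form_dom_def by auto
  have "continuous_on D (\<lambda>h. c * t x h)" using cx by (intro continuous_on_mult continuous_on_const)
  then have "continuous_on D (t (c *\<^sub>C x))"
    by (rule continuous_on_eq) (simp add: tsc1[OF xD])
  then show "c *\<^sub>C x \<in> dm" unfolding form_dom_def using Dsc[OF xD] by simp
qed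

lemma sep_cdual: "(\<And>f. f \<in> cdual \<Longrightarrow> f e = 0) \<Longrightarrow> e = 0"
  using separation[of e] by blast

lemma dm_dense: "closure dm = UNIV"
proof -
  have "D \<subseteq> closure dm"
  proof
    fix y assume yD: "y \<in> D"
    have dmD': "dm \<subseteq> D" using dmD by blast
    have "\<exists>w\<in>D. (\<exists>m. (\<forall>n. m n \<in> dm) \<and> (\<lambda>n. q (m n - w)) \<longlonglongrightarrow> 0) \<and> (\<forall>h\<in>dm. t w h = t y h)"
    proof (rule minimize[OF dm_sub dmD'])
      show "t y (a + b) = t y a + t y b" if "a \<in> dm" "b \<in> dm" for a b using tadd2[OF yD] dmD that by simp
      show "t y (c *\<^sub>C a) = cnj c * t y a" if "a \<in> dm" for c a using tsc2[OF yD] dmD that by simp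
      show "- q y \<le> q m - 2 * Re (t y m)" if "m \<in> dm" for m using Re_bound[OF yD dmD[OF that]] by simp
    qed
    then obtain w m where wD: "w \<in> D" and mdm: "\<And>n. m n \<in> dm" and ml: "(\<lambda>n. q (m n - w)) \<longlonglongrightarrow> 0"
      and wt: "\<And>h. h \<in> dm \<Longrightarrow> t w h = t y h" by blast
    have mD: "m n \<in> D" for n using dmD[OF mdm] .
    have "(\<lambda>n. norm (m n - w)) \<longlonglongrightarrow> 0"
    proof (rule real_tendsto_sandwich[where f="\<lambda>n. 0" and h="\<lambda>n. sqrt (q (m n - w) / \<gamma>)"])
      show "\<forall>\<^sub>F n in sequentially. 0 \<le> norm (m n - w)" by simp
      show "\<forall>\<^sub>F n in sequentially. norm (m n - w) \<le> sqrt (q (m n - w) / \<gamma>)"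
      proof (rule always_eventually, rule allI)
        fix n
        have "(norm (m n - w))\<^sup>2 \<le> q (m n - w) / \<gamma>" by (rule norm_le_q[OF Ddiff[OF mD wD]])
        then show "norm (m n - w) \<le> sqrt (q (m n - w) / \<gamma>)" by (rule real_le_rsqrt)
      qed
      show "(\<lambda>n. 0) \<longlonglongrightarrow> (0::real)" by simp
      have "(\<lambda>n. sqrt (q (m n - w) / \<gamma>)) \<longlonglongrightarrow> sqrt (0 / \<gamma>)"
        by (intro tendsto_real_sqrt tendsto_divide ml tendsto_const) (use gpos in simp)
      then show "(\<lambda>n. sqrt (q (m n - w) / \<gamma>)) \<longlonglongrightarrow> 0" by simp
    qed
    then have "(\<lambda>n. m n - w) \<longlonglongrightarrow> 0" by (simp only: tendsto_norm_zero_iff)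
    then have "m \<longlonglongrightarrow> w" by (simp only: LIM_zero_iff)
    then have wcl: "w \<in> closure dm" unfolding closure_sequential using mdm by blast
    have "y - w = 0"
    proof (rule sep_cdual)
      fix f :: "'a \<Rightarrow> complex" assume f: "f \<in> cdual"
      obtain x where x: "x \<in> dm" "\<forall>h\<in>D. t x h = f h" using Rdom[OF f] by blast
      have xD: "x \<in> D" using dmD[OF x(1)] .
      have "f (y - w) = t x (y - w)" using x(2) Ddiff[OF yD wD] by simp
      also have "\<dots> = cnj (t (y - w) x)" using herm[OF Ddiff[OF yD wD] xD] by simp
      also have "t (y - w) x = t y x - t w x" by (rule tdiff1[OF yD wD xD])
      also have "\<dots> = 0" using wt[OF x(1)] by simp
      finally show "f (y - w) = 0" by simp
    qed
    then show "y \<in> closure dm" using wcl by simp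
  qed
  then have "closure D \<subseteq> closure dm" by (simp add: closure_minimal)
  then show ?thesis using dense by auto
qed

end


context fsetup begin

lemma A_add: "x \<in> dm \<Longrightarrow> y \<in> dm \<Longrightarrow> A (x + y) = (\<lambda>z. A x z + A y z)"
proof -
  assume x: "x \<in> dm" and y: "y \<in> dm"
  have xy: "x + y \<in> dm" using dm_sub x y unfolding complex_subspace_def by blast
  show ?thesis
  proof (rule cdual_eq_on_dense[OF opdom(1)[OF xy] cdual_add[OF opdom(1)[OF x] opdom(1)[OF y]] dense])
    fix h assume h: "h \<in> D"
    show "A (x + y) h = A x h + A y h"
      using opdom(2)[OF xy h] opdom(2)[OF x h] opdom(2)[OF y h] tadd1[OF dmD[OF x] dmD[OF y] h] by simp
  qed
qed

lemma A_sc: "x \<in> dm \<Longrightarrow> A (c *\<^sub>C x) = (\<lambda>z. c * A x z)"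
proof -
  assume x: "x \<in> dm"
  have cx: "c *\<^sub>C x \<in> dm" using dm_sub x unfolding complex_subspace_def by blast
  show ?thesis
  proof (rule cdual_eq_on_dense[OF opdom(1)[OF cx] cdual_scale[OF opdom(1)[OF x]] dense])
    fix h assume h: "h \<in> D"
    show "A (c *\<^sub>C x) h = c * A x h"
      using opdom(2)[OF cx h] opdom(2)[OF x h] tsc1[OF dmD[OF x] h] by simp
  qed
qed

lemma dd: "dd_operator dm A"
  unfolding dd_operator_def using dm_sub dm_dense opdom(1) A_add A_sc by blast

lemma pos: "positive_op dm A"
  unfolding positive_op_def
proof
  fix x assume x: "x \<in> dm"
  have xD: "x \<in> D" using dmD[OF x] .
  have "A x x = t x x" by (rule opdom(2)[OF x xD])
  then show "Im (A x x) = 0 \<and> 0 \<le> Re (A x x)" using imzero[OF xD] qnn[OF xD] by (simp add: q_def)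
qed

lemma adj_sym: assumes x: "x \<in> dm" and y: "y \<in> dm" shows "A x y = cnj (A y x)"
proof -
  have xD: "x \<in> D" using dmD[OF x] .
  have yD: "y \<in> D" using dmD[OF y] .
  have "A x y = t x y" by (rule opdom(2)[OF x yD])
  also have "\<dots> = cnj (t y x)" by (rule herm[OF yD xD])
  also have "t y x = A y x" by (rule opdom(2)[OF y xD, symmetric])
  finally show ?thesis .
qed

lemma adjdom: "adjoint_dom dm A = dm"
proof
  show "dm \<subseteq> adjoint_dom dm A"
  proof
    fix y assume y: "y \<in> dm"
    have "continuous_on dm (A y)" using cdualD(2)[OF opdom(1)[OF y]] by (rule continuous_on_subset) simp
    then have "continuous_on dm (\<lambda>x. cnj (A y x))" by (intro continuous_intros)
    then have "continuous_on dm (\<lambda>x. A x y)"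
    proof (rule continuous_on_eq)
      fix x assume x: "x \<in> dm"
      show "cnj (A y x) = A x y" using adj_sym[OF x y] by simp
    qed
    then show "y \<in> adjoint_dom dm A" unfolding adjoint_dom_def by simp
  qed
next
  show "adjoint_dom dm A \<subseteq> dm"
  proof
    fix y assume "y \<in> adjoint_dom dm A"
    then have cy: "continuous_on dm (\<lambda>x. A x y)" unfolding adjoint_dom_def by simp
    have "continuous_on dm (\<lambda>x. cnj (A x y))" using cy by (intro continuous_intros)
    moreover have "cnj (A (x + x') y) = cnj (A x y) + cnj (A x' y)" if "x \<in> dm" "x' \<in> dm" for x x'
      using A_add[OF that] by simp
    moreover have "cnj (A (c *\<^sub>C x) y) = cnj c * cnj (A x y)" if "x \<in> dm" for c x
      using A_sc[OF that] by simp
    ultimately obtain g where g: "g \<in> cdual" "\<forall>x\<in>dm. g x = cnj (A x y)"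
      using extend_dense[OF dm_sub dm_dense, of "\<lambda>x. cnj (A x y)"] by blast
    obtain z where z: "z \<in> dm" "A z = g" "\<forall>h\<in>D. t z h = g h" using Rdom[OF g(1)] by blast
    have zD: "z \<in> D" using dmD[OF z(1)] .
    have eq: "A x y = A x z" if x: "x \<in> dm" for x
    proof -
      have "A x y = cnj (g x)" using g(2) x by simp
      also have "g x = A z x" using z(2) by simp
      also have "cnj (A z x) = A x z" using adj_sym[OF x z(1)] by simp
      finally show ?thesis .
    qed
    have "y - z = 0"
    proof (rule sep_cdual)
      fix f :: "'a \<Rightarrow> complex" assume f: "f \<in> cdual"
      obtain x where x: "x \<in> dm" "A x = f" using Rdom[OF f] by blast
      have "f (y - z) = A x (y - z)" using x by simp
      also have "\<dots> = A x y - A x z" by (rule conj_linear_diff[OF cdualD(1)[OF opdom(1)[OF x(1)]]])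
      also have "\<dots> = 0" using eq[OF x(1)] by simp
      finally show "f (y - z) = 0" .
    qed
    then show "y \<in> dm" using z(1) by simp
  qed
qed

lemma adjop: "y \<in> dm \<Longrightarrow> adjoint_op dm A y = A y"
  unfolding adjoint_op_def
proof (rule the_equality)
  assume y: "y \<in> dm"
  have "cnj (A y x) = A x y" if x: "x \<in> dm" for x using adj_sym[OF x y] by simp
  then show "A y \<in> cdual \<and> (\<forall>x\<in>dm. cnj (A y x) = A x y)" using opdom(1)[OF y] by blast
  fix w assume w: "w \<in> cdual \<and> (\<forall>x\<in>dm. cnj (w x) = A x y)"
  show "w = A y"
  proof (rule cdual_eq_on_dense[OF _ opdom(1)[OF y] dm_dense])
    show "w \<in> cdual" using w by simp
    fix x assume x: "x \<in> dm"
    have "cnj (w x) = cnj (A y x)" using w x adj_sym[OF x y] by simp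
    then show "w x = A y x" by simp
  qed
qed

lemma sa: "self_adjoint_op dm A"
  unfolding self_adjoint_op_def using adjdom adjop by simp

end

theorem theorem1:
  fixes D :: "'a::{cnormed_vector, banach} set"
    and t :: "'a \<Rightarrow> 'a \<Rightarrow> complex"
    and \<gamma> :: real
  assumes "reflexive_space TYPE('a)"
    and "complex_subspace D"
    and "closure D = UNIV"
    and "sesquilinear_on D t"
    and "\<gamma> > 0"
    and "\<forall>x\<in>D. Im (t x x) = 0 \<and> \<gamma> * (norm x)\<^sup>2 \<le> Re (t x x)"
    and "form_complete D t"
  shows "dd_operator (form_dom D t) (form_op D t) \<and>
         positive_op (form_dom D t) (form_op D t) \<and>
         self_adjoint_op (form_dom D t) (form_op D t)"
proof -
  interpret fsetup D t \<gamma> using assms(2-7) by unfold_locales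
  show ?thesis using dd pos sa by simp
qed


end
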